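(* For any two POPs $p$ and $q$, $p+q\sim q+p$.
   Context: A partially ordered pattern (POP) $p$ of size $k$ is a partial order $\le_p$ on $[k]=\{1,\dots,k\}$. A permutation $\pi=\pi_1\cdots\pi_n$ contains $p$ if there are indices $i_1<\dots<i_k$ with $\pi_{i_j}<\pi_{i_m}$ whenever $j<_p m$; otherwise it avoids $p$. $\mathfrak S_n(p)$ is the set of permutations of $[n]$ avoiding $p$, and $p\sim q$ (Wilf-equivalence) means $|\mathfrak S_n(p)|=|\mathfrak S_n(q)|$ for all $n\ge 1$. For a POP $p$ of size $k$ and a POP $q$ of size $l$, the disjoint sum $p+q$ is the POP of size $k+l$ on $[k+l]$ in which $i\le j$ for $i,j\in[k]$ iff $i\le_p j$, $k+i\le k+j$ for $i,j\in[l]$ iff $i\le_q j$, and no element of $[k]$ is comparable with an element of $[k+1,k+l]$. *)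

theory Defs
  imports Main
begin

text \<open>A POP of size k is represented as a pair (k, P), where P is the (reflexive)
  partial order relation on {1..k}, given as a set of pairs.\<close>
type_synonym pop = "nat \<times> (nat \<times> nat) set"

definition is_POP :: "pop \<Rightarrow> bool" where
  "is_POP p \<longleftrightarrow> snd p \<subseteq> {1..fst p} \<times> {1..fst p} \<and> partial_order_on {1..fst p} (snd p)"

definition perms :: "nat \<Rightarrow> nat list set" where
  "perms n = {\<pi>. distinct \<pi> \<and> set \<pi> = {1..n}}"

text \<open>pi contains p: there are positions idx 1 < ... < idx k (0-based list positions)
  such that pi at idx j is less than pi at idx m whenever j is strictly below m in p.\<close>
definition contains :: "nat list \<Rightarrow> pop \<Rightarrow> bool" where
  "contains \<pi> p \<longleftrightarrow> (\<exists>idx :: nat \<Rightarrow> nat.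
      strict_mono_on {1..fst p} idx \<and> (\<forall>j\<in>{1..fst p}. idx j < length \<pi>) \<and>
      (\<forall>j m. (j, m) \<in> snd p \<and> j \<noteq> m \<longrightarrow> \<pi> ! idx j < \<pi> ! idx m))"

definition avoiders :: "nat \<Rightarrow> pop \<Rightarrow> nat list set" where
  "avoiders n p = {\<pi> \<in> perms n. \<not> contains \<pi> p}"

definition wilf_equiv :: "pop \<Rightarrow> pop \<Rightarrow> bool" where
  "wilf_equiv p q \<longleftrightarrow> (\<forall>n\<ge>1. card (avoiders n p) = card (avoiders n q))"

definition disjoint_sum :: "pop \<Rightarrow> pop \<Rightarrow> pop" where
  "disjoint_sum p q = (fst p + fst q,
     snd p \<union> {(fst p + i, fst p + j) | i j. (i, j) \<in> snd q})"

end

theory Submission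
  imports Defs
begin

definition ordiso :: "nat list \<Rightarrow> nat list \<Rightarrow> bool" where
  "ordiso xs ys \<longleftrightarrow> length xs = length ys \<and>
     (\<forall>i<length xs. \<forall>j<length xs. xs!i < xs!j \<longleftrightarrow> ys!i < ys!j)"

definition oinv :: "(nat list \<Rightarrow> bool) \<Rightarrow> bool" where
  "oinv P \<longleftrightarrow> (\<forall>xs ys. ordiso xs ys \<longrightarrow> P xs \<longrightarrow> P ys)"

definition LL :: "nat set \<Rightarrow> (nat list \<Rightarrow> bool) \<Rightarrow> nat list set" where
  "LL T P = {xs. distinct xs \<and> set xs = T \<and> P xs}"

lemma ordiso_sym: "ordiso xs ys \<Longrightarrow> ordiso ys xs"
  unfolding ordiso_def by auto

lemma ordiso_take: "ordiso xs ys \<Longrightarrow> ordiso (take i xs) (take i ys)"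
  unfolding ordiso_def by auto

lemma ordiso_map:
  assumes "strict_mono_on (set xs) f" shows "ordiso xs (map f xs)"
  unfolding ordiso_def using strict_mono_on_less[OF assms] by auto

lemma pop_field:
  assumes "is_POP p" "(j, m) \<in> snd p" shows "j \<in> {1..fst p}" "m \<in> {1..fst p}"
  using assms unfolding is_POP_def by auto

lemma contains_ordiso:
  assumes "is_POP p" "contains xs p" "ordiso xs ys" shows "contains ys p"
proof -
  obtain idx where i1: "strict_mono_on {1..fst p} idx" and i2: "\<forall>j\<in>{1..fst p}. idx j < length xs"
    and i3: "\<forall>j m. (j, m) \<in> snd p \<and> j \<noteq> m \<longrightarrow> xs ! idx j < xs ! idx m"
    using assms(2) unfolding contains_def by blast
  have len: "length xs = length ys" using assms(3) ordiso_def by auto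
  show ?thesis unfolding contains_def
  proof (intro exI conjI allI impI)
    show "strict_mono_on {1..fst p} idx" by fact
    show "\<forall>j\<in>{1..fst p}. idx j < length ys" using i2 len by auto
    fix j m assume a: "(j, m) \<in> snd p \<and> j \<noteq> m"
    have "j \<in> {1..fst p}" "m \<in> {1..fst p}" using pop_field[OF assms(1)] a by auto
    then have "idx j < length xs" "idx m < length xs" using i2 by auto
    then show "ys ! idx j < ys ! idx m" using i3 a assms(3) unfolding ordiso_def by blast
  qed
qed

lemma oinv_avoid: "is_POP p \<Longrightarrow> oinv (\<lambda>xs. \<not> contains xs p)"
  unfolding oinv_def using contains_ordiso ordiso_sym by blast

lemma oinv_avoid_take: "is_POP p \<Longrightarrow> oinv (\<lambda>xs. \<not> contains (take i xs) p)"
  unfolding oinv_def using contains_ordiso ordiso_sym ordiso_take by blast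

lemma oinv_True: "oinv (\<lambda>xs. True)"
  unfolding oinv_def by auto

definition rk :: "nat set \<Rightarrow> nat \<Rightarrow> nat" where
  "rk T x = card {y\<in>T. y \<le> x}"

lemma rk_mono:
  assumes "finite T" shows "strict_mono_on T (rk T)"
proof (rule strict_mono_onI)
  fix x y assume "x \<in> T" "y \<in> T" "x < y"
  then have "{z\<in>T. z \<le> x} \<subset> {z\<in>T. z \<le> y}" by force
  then show "rk T x < rk T y" unfolding rk_def
    using assms by (intro psubset_card_mono) auto
qed

lemma rk_bij:
  assumes "finite T" shows "bij_betw (rk T) T {1..card T}"
proof -
  have inj: "inj_on (rk T) T" using strict_mono_on_imp_inj_on[OF rk_mono[OF assms]] .
  have sub: "rk T ` T \<subseteq> {1..card T}"
  proof
    fix z assume "z \<in> rk T ` T"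
    then obtain x where x: "x \<in> T" "z = rk T x" by auto
    have "{y\<in>T. y \<le> x} \<noteq> {}" using x by auto
    moreover have "finite {y\<in>T. y \<le> x}" using assms by simp
    ultimately have "card {y\<in>T. y \<le> x} > 0" using card_gt_0_iff by blast
    then have "rk T x \<ge> 1" unfolding rk_def by simp
    moreover have "rk T x \<le> card T" unfolding rk_def using assms by (intro card_mono) auto
    ultimately show "z \<in> {1..card T}" using x by auto
  qed
  have "card (rk T ` T) = card {1..card T}" using card_image[OF inj] by simp
  then have "rk T ` T = {1..card T}" using card_subset_eq[OF _ sub] by simp
  then show ?thesis using inj bij_betw_def by blast
qed

lemma finite_LL: "finite T \<Longrightarrow> finite (LL T P)"
proof -
  assume "finite T"
  have "LL T P \<subseteq> {xs. set xs \<subseteq> T \<and> length xs = card T}"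
  proof
    fix xs assume "xs \<in> LL T P"
    then have "distinct xs" "set xs = T" unfolding LL_def by auto
    then show "xs \<in> {xs. set xs \<subseteq> T \<and> length xs = card T}"
      using distinct_card[of xs] by simp
  qed
  moreover have "finite {xs. set xs \<subseteq> T \<and> length xs = card T}"
    using finite_lists_length_eq[OF \<open>finite T\<close>] by simp
  ultimately show ?thesis using finite_subset by blast
qed

lemma perms_LL: "perms n = LL {1..n} (\<lambda>_. True)"
  unfolding perms_def LL_def by auto

lemma card_LL:
  assumes "finite T" "oinv P"
  shows "card (LL T P) = card {\<sigma>\<in>perms (card T). P \<sigma>}"
proof -
  let ?f = "rk T" and ?m = "card T"
  define g where "g = inv_into T ?f"
  have bij: "bij_betw ?f T {1..?m}" using rk_bij[OF assms(1)] .
  have sm: "strict_mono_on T ?f" using rk_mono[OF assms(1)] .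
  have inj: "inj_on ?f T" using bij_betw_imp_inj_on[OF bij] .
  have img: "?f ` T = {1..?m}" using bij_betw_imp_surj_on[OF bij] .
  have gf: "g (?f x) = x" if "x \<in> T" for x
    unfolding g_def using inv_into_f_f[OF inj that] .
  have fg: "?f (g y) = y" if "y \<in> {1..?m}" for y
  proof -
    have "y \<in> ?f ` T" using img that by simp
    then show ?thesis unfolding g_def by (rule f_inv_into_f)
  qed
  have gimg: "g ` {1..?m} = T" unfolding g_def using bij_betw_imp_surj_on[OF bij_betw_inv_into[OF bij]] .
  have ginj: "inj_on g {1..?m}" unfolding g_def using inj_on_inv_into[of "{1..?m}" ?f T] img by simp
  have "bij_betw (map ?f) (LL T P) {\<sigma>\<in>perms ?m. P \<sigma>}"
  proof (rule bij_betw_byWitness[where f'="map g"])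
    show "\<forall>a\<in>LL T P. map g (map ?f a) = a"
    proof
      fix a assume "a \<in> LL T P"
      then have "set a = T" unfolding LL_def by simp
      then show "map g (map ?f a) = a" unfolding map_map
        by (intro map_idI) (simp add: gf)
    qed
    show "\<forall>a'\<in>{\<sigma> \<in> perms ?m. P \<sigma>}. map ?f (map g a') = a'"
    proof
      fix a assume "a \<in> {\<sigma> \<in> perms ?m. P \<sigma>}"
      then have "set a = {1..?m}" unfolding perms_def by simp
      then show "map ?f (map g a) = a" unfolding map_map
        by (intro map_idI) (simp add: fg)
    qed
    show "map ?f ` LL T P \<subseteq> {\<sigma> \<in> perms ?m. P \<sigma>}"
    proof
      fix s assume "s \<in> map ?f ` LL T P"
      then obtain xs where xs: "distinct xs" "set xs = T" "P xs" "s = map ?f xs"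
        unfolding LL_def by auto
      have "ordiso xs s" using ordiso_map[of xs ?f] sm xs by simp
      then have "P s" using assms(2) xs unfolding oinv_def by blast
      moreover have "distinct s" using xs inj by (simp add: distinct_map)
      moreover have "set s = {1..?m}" using xs img by simp
      ultimately show "s \<in> {\<sigma> \<in> perms ?m. P \<sigma>}" unfolding perms_def by simp
    qed
    show "map g ` {\<sigma> \<in> perms ?m. P \<sigma>} \<subseteq> LL T P"
    proof
      fix s assume "s \<in> map g ` {\<sigma> \<in> perms ?m. P \<sigma>}"
      then obtain \<sigma> where s: "distinct \<sigma>" "set \<sigma> = {1..?m}" "P \<sigma>" "s = map g \<sigma>"
        unfolding perms_def by auto
      have ss: "set s = T" using s gimg by simp
      have ds: "distinct s" using s ginj by (simp add: distinct_map)
      have "map ?f s = \<sigma>" unfolding s(4) map_map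
        by (intro map_idI) (simp add: fg s(2))
      moreover have "ordiso s (map ?f s)" using ordiso_map[of s ?f] sm ss by simp
      ultimately have "ordiso \<sigma> s" using ordiso_sym by simp
      then have "P s" using assms(2) s unfolding oinv_def by blast
      then show "s \<in> LL T P" unfolding LL_def using ss ds by simp
    qed
  qed
  then show ?thesis by (rule bij_betw_same_card)
qed

lemma perms_length: "\<pi> \<in> perms n \<Longrightarrow> length \<pi> = n"
  unfolding perms_def using distinct_card by fastforce

lemma split_card:
  assumes "i \<le> n" "oinv P" "oinv Q"
  shows "card {\<pi>\<in>perms n. P (take i \<pi>) \<and> Q (drop i \<pi>)}
       = (n choose i) * card {\<sigma>\<in>perms i. P \<sigma>} * card {\<tau>\<in>perms (n-i). Q \<tau>}"
proof -
  define Ss where "Ss = {S. S \<subseteq> {1..n} \<and> card S = i}"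
  define B where "B = (\<lambda>S. LL S P \<times> LL ({1..n} - S) Q)"
  let ?lhs = "{\<pi>\<in>perms n. P (take i \<pi>) \<and> Q (drop i \<pi>)}"
  have "bij_betw (\<lambda>\<pi>. (set (take i \<pi>), (take i \<pi>, drop i \<pi>))) ?lhs (Sigma Ss B)"
  proof (rule bij_betw_byWitness[where f'="\<lambda>(S, (xs, ys)). xs @ ys"])
    show "\<forall>a\<in>?lhs. (\<lambda>(S, (xs, ys)). xs @ ys) (set (take i a), (take i a, drop i a)) = a" by simp
    show "\<forall>a'\<in>Sigma Ss B. (\<lambda>\<pi>. (set (take i \<pi>), (take i \<pi>, drop i \<pi>))) ((\<lambda>(S, (xs, ys)). xs @ ys) a') = a'"
    proof
      fix a' assume "a' \<in> Sigma Ss B"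
      then obtain S xs ys where a: "a' = (S, (xs, ys))" "S \<in> Ss" "xs \<in> LL S P" "ys \<in> LL ({1..n} - S) Q"
        unfolding B_def by auto
      have "length xs = i" using a distinct_card[of xs] unfolding LL_def Ss_def by auto
      then show "(\<lambda>\<pi>. (set (take i \<pi>), (take i \<pi>, drop i \<pi>))) ((\<lambda>(S, (xs, ys)). xs @ ys) a') = a'"
        using a unfolding LL_def by auto
    qed
    show "(\<lambda>\<pi>. (set (take i \<pi>), (take i \<pi>, drop i \<pi>))) ` ?lhs \<subseteq> Sigma Ss B"
    proof
      fix z assume "z \<in> (\<lambda>\<pi>. (set (take i \<pi>), (take i \<pi>, drop i \<pi>))) ` ?lhs"
      then obtain \<pi> where pi: "\<pi> \<in> perms n" "P (take i \<pi>)" "Q (drop i \<pi>)"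
         "z = (set (take i \<pi>), (take i \<pi>, drop i \<pi>))" by auto
      have len: "length \<pi> = n" using perms_length pi by blast
      have d: "distinct \<pi>" "set \<pi> = {1..n}" using pi unfolding perms_def by auto
      have "distinct (take i \<pi> @ drop i \<pi>)" using d by simp
      then have dd: "distinct (take i \<pi>)" "distinct (drop i \<pi>)" "set (take i \<pi>) \<inter> set (drop i \<pi>) = {}"
        by (simp_all only: distinct_append)
      have un: "set (take i \<pi>) \<union> set (drop i \<pi>) = {1..n}"
        using d(2) set_append[of "take i \<pi>" "drop i \<pi>"] by simp
      have "card (set (take i \<pi>)) = i" using distinct_card[OF dd(1)] len assms(1) by simp
      then have "set (take i \<pi>) \<in> Ss" unfolding Ss_def using un by auto
      moreover have "set (drop i \<pi>) = {1..n} - set (take i \<pi>)" using un dd(3) by auto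
      ultimately show "z \<in> Sigma Ss B" unfolding B_def LL_def using pi dd by auto
    qed
    show "(\<lambda>(S, (xs, ys)). xs @ ys) ` Sigma Ss B \<subseteq> ?lhs"
    proof
      fix z assume "z \<in> (\<lambda>(S, (xs, ys)). xs @ ys) ` Sigma Ss B"
      then obtain S xs ys where a: "z = xs @ ys" "S \<in> Ss" "xs \<in> LL S P" "ys \<in> LL ({1..n} - S) Q"
        unfolding B_def by auto
      have len: "length xs = i" using a distinct_card[of xs] unfolding LL_def Ss_def by auto
      have "S \<subseteq> {1..n}" using a unfolding Ss_def by simp
      then have "z \<in> perms n" using a unfolding perms_def LL_def by auto
      then show "z \<in> ?lhs" using a len unfolding LL_def by simp
    qed
  qed
  then have "card ?lhs = card (Sigma Ss B)" by (rule bij_betw_same_card)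
  also have "\<dots> = (\<Sum>S\<in>Ss. card (B S))"
    by (rule card_SigmaI) (auto simp: Ss_def B_def finite_LL finite_subset)
  also have "\<dots> = (\<Sum>S\<in>Ss. card {\<sigma>\<in>perms i. P \<sigma>} * card {\<tau>\<in>perms (n-i). Q \<tau>})"
  proof (rule sum.cong[OF refl])
    fix S assume "S \<in> Ss"
    then have S: "S \<subseteq> {1..n}" "card S = i" unfolding Ss_def by auto
    have fS: "finite S" using S finite_subset by blast
    have "card ({1..n} - S) = n - i" using S fS card_Diff_subset[OF fS S(1)] by simp
    then show "card (B S) = card {\<sigma>\<in>perms i. P \<sigma>} * card {\<tau>\<in>perms (n-i). Q \<tau>}"
      unfolding B_def card_cartesian_product
      using card_LL[OF fS assms(2)] card_LL[of "{1..n} - S" Q] assms(3) S by simp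
  qed
  also have "\<dots> = card Ss * (card {\<sigma>\<in>perms i. P \<sigma>} * card {\<tau>\<in>perms (n-i). Q \<tau>})" by simp
  also have "card Ss = n choose i" unfolding Ss_def using n_subsets[of "{1..n}" i] by simp
  finally show ?thesis by simp
qed

lemma contains_take:
  assumes "is_POP p" "contains (take i xs) p" shows "contains xs p"
proof -
  obtain idx where i1: "strict_mono_on {1..fst p} idx" and i2: "\<forall>j\<in>{1..fst p}. idx j < length (take i xs)"
    and i3: "\<forall>j m. (j, m) \<in> snd p \<and> j \<noteq> m \<longrightarrow> take i xs ! idx j < take i xs ! idx m"
    using assms(2) unfolding contains_def by blast
  show ?thesis unfolding contains_def
  proof (intro exI conjI allI impI)
    show "strict_mono_on {1..fst p} idx" by fact
    show "\<forall>j\<in>{1..fst p}. idx j < length xs" using i2 by auto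
    fix j m assume a: "(j, m) \<in> snd p \<and> j \<noteq> m"
    have "j \<in> {1..fst p}" "m \<in> {1..fst p}" using pop_field[OF assms(1)] a by auto
    then have "idx j < length (take i xs)" "idx m < length (take i xs)" using i2 by auto
    then have "take i xs ! idx j = xs ! idx j" "take i xs ! idx m = xs ! idx m" by auto
    then show "xs ! idx j < xs ! idx m" using i3 a by metis
  qed
qed

lemma contains_drop:
  assumes "is_POP p" "d \<le> length xs" "contains (drop d xs) p" shows "contains xs p"
proof -
  obtain idx where i1: "strict_mono_on {1..fst p} idx" and i2: "\<forall>j\<in>{1..fst p}. idx j < length (drop d xs)"
    and i3: "\<forall>j m. (j, m) \<in> snd p \<and> j \<noteq> m \<longrightarrow> drop d xs ! idx j < drop d xs ! idx m"
    using assms(3) unfolding contains_def by blast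
  show ?thesis unfolding contains_def
  proof (intro exI[of _ "\<lambda>j. d + idx j"] conjI allI impI)
    show "strict_mono_on {1..fst p} (\<lambda>j. d + idx j)" using i1
      unfolding strict_mono_on_def by auto
    show "\<forall>j\<in>{1..fst p}. d + idx j < length xs" using i2 by auto
    fix j m assume a: "(j, m) \<in> snd p \<and> j \<noteq> m"
    then show "xs ! (d + idx j) < xs ! (d + idx m)" using i3 assms(2) by (simp add: nth_drop)
  qed
qed

lemma contains_Nil:
  assumes "fst p \<ge> 1" shows "\<not> contains [] p"
  using assms unfolding contains_def by auto

lemma contains_take_mono:
  assumes "is_POP p" "i \<le> j" "contains (take i xs) p" shows "contains (take j xs) p"
proof -
  have "take i xs = take i (take j xs)" using assms(2) by (simp add: min_def)
  then show ?thesis using contains_take[OF assms(1)] assms(3) by metis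
qed

lemma contains_drop_anti:
  assumes "is_POP p" "i \<le> j" "j \<le> length xs" "contains (drop j xs) p" shows "contains (drop i xs) p"
proof -
  have "drop j xs = drop (j - i) (drop i xs)" using assms(2) by simp
  moreover have "j - i \<le> length (drop i xs)" using assms(2,3) by simp
  ultimately show ?thesis using contains_drop[OF assms(1)] assms(4) by metis
qed

lemma contains_sum:
  assumes P: "is_POP p" and Q: "is_POP q" and k: "fst p \<ge> 1"
  shows "contains \<pi> (disjoint_sum p q) \<longleftrightarrow>
         (\<exists>i\<le>length \<pi>. contains (take i \<pi>) p \<and> contains (drop i \<pi>) q)"
proof
  let ?k = "fst p" and ?l = "fst q"
  assume "contains \<pi> (disjoint_sum p q)"
  then obtain idx where i1': "strict_mono_on {1..fst (disjoint_sum p q)} idx"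
    and i2': "\<forall>j\<in>{1..fst (disjoint_sum p q)}. idx j < length \<pi>"
    and i3': "\<forall>j m. (j, m) \<in> snd (disjoint_sum p q) \<and> j \<noteq> m \<longrightarrow> \<pi> ! idx j < \<pi> ! idx m"
    unfolding contains_def by blast
  have fs: "fst (disjoint_sum p q) = ?k + ?l" by (simp add: disjoint_sum_def)
  have sp: "(j, m) \<in> snd (disjoint_sum p q)" if "(j, m) \<in> snd p" for j m
    using that by (simp add: disjoint_sum_def)
  have sq: "(?k + j, ?k + m) \<in> snd (disjoint_sum p q)" if "(j, m) \<in> snd q" for j m
    using that by (auto simp add: disjoint_sum_def)
  have i1: "strict_mono_on {1..?k+?l} idx" using i1' fs by simp
  have i2: "\<forall>j\<in>{1..?k+?l}. idx j < length \<pi>" using i2' fs by simp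
  define i where "i = Suc (idx ?k)"
  have "?k \<in> {1..?k+?l}" using k by simp
  then have il: "i \<le> length \<pi>" using i2 unfolding i_def by (simp add: Suc_le_eq)
  have le: "idx j \<le> idx ?k" if "j \<in> {1..?k}" for j
  proof (cases "j = ?k")
    case False
    then have "j < ?k" using that by auto
    moreover have "j \<in> {1..?k+?l}" "?k \<in> {1..?k+?l}" using that k by auto
    ultimately show ?thesis using i1 unfolding strict_mono_on_def by (meson less_imp_le)
  qed simp
  have gt: "idx (?k + j) > idx ?k" if "j \<in> {1..?l}" for j
  proof -
    have "?k \<in> {1..?k+?l}" "?k + j \<in> {1..?k+?l}" "?k < ?k + j" using that k by auto
    then show ?thesis using strict_mono_onD[OF i1] by blast
  qed
  have A: "contains (take i \<pi>) p" unfolding contains_def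
  proof (intro exI[of _ idx] conjI allI impI)
    show "strict_mono_on {1..?k} idx"
    proof (rule strict_mono_onI)
      fix r s assume "r \<in> {1..?k}" "s \<in> {1..?k}" "r < s"
      then show "idx r < idx s" using strict_mono_onD[OF i1, of r s] by simp
    qed
    show "\<forall>j\<in>{1..?k}. idx j < length (take i \<pi>)"
    proof
      fix j assume "j \<in> {1..?k}"
      then have "idx j < i" using le unfolding i_def by (simp add: less_Suc_eq_le)
      then show "idx j < length (take i \<pi>)" using il by simp
    qed
    fix j m assume a: "(j, m) \<in> snd p \<and> j \<noteq> m"
    have "j \<in> {1..?k}" "m \<in> {1..?k}" using pop_field[OF P] a by auto
    then have "idx j < i" "idx m < i" using le unfolding i_def by (simp_all add: less_Suc_eq_le)
    then have "take i \<pi> ! idx j = \<pi> ! idx j" "take i \<pi> ! idx m = \<pi> ! idx m" by simp_all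
    moreover have "\<pi> ! idx j < \<pi> ! idx m" using i3' sp a by blast
    ultimately show "take i \<pi> ! idx j < take i \<pi> ! idx m" by simp
  qed
  have B: "contains (drop i \<pi>) q" unfolding contains_def
  proof (intro exI[of _ "\<lambda>j. idx (?k + j) - i"] conjI allI impI)
    show "strict_mono_on {1..?l} (\<lambda>j. idx (?k + j) - i)"
    proof (rule strict_mono_onI)
      fix r s assume rs: "r \<in> {1..?l}" "s \<in> {1..?l}" "r < s"
      have "idx (?k + r) < idx (?k + s)" using strict_mono_onD[OF i1, of "?k + r" "?k + s"] rs by simp
      moreover have "idx (?k + r) \<ge> i" using gt[OF rs(1)] unfolding i_def by simp
      ultimately show "idx (?k + r) - i < idx (?k + s) - i" by simp
    qed
    show "\<forall>j\<in>{1..?l}. idx (?k + j) - i < length (drop i \<pi>)"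
    proof
      fix j assume j: "j \<in> {1..?l}"
      have "idx (?k + j) < length \<pi>" using i2 j by auto
      moreover have "idx (?k + j) \<ge> i" using gt[OF j] unfolding i_def by simp
      ultimately show "idx (?k + j) - i < length (drop i \<pi>)" by simp
    qed
    fix j m assume a: "(j, m) \<in> snd q \<and> j \<noteq> m"
    have jm: "j \<in> {1..?l}" "m \<in> {1..?l}" using pop_field[OF Q] a by auto
    have "idx (?k + j) \<ge> i" "idx (?k + m) \<ge> i" using gt[OF jm(1)] gt[OF jm(2)] unfolding i_def by simp_all
    moreover have "\<pi> ! idx (?k + j) < \<pi> ! idx (?k + m)" using i3' sq a by simp
    ultimately show "drop i \<pi> ! (idx (?k + j) - i) < drop i \<pi> ! (idx (?k + m) - i)"
      using il by (simp add: nth_drop)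
  qed
  show "\<exists>i\<le>length \<pi>. contains (take i \<pi>) p \<and> contains (drop i \<pi>) q" using A B il by blast
next
  let ?k = "fst p" and ?l = "fst q"
  assume "\<exists>i\<le>length \<pi>. contains (take i \<pi>) p \<and> contains (drop i \<pi>) q"
  then obtain i where il: "i \<le> length \<pi>" and A: "contains (take i \<pi>) p" and B: "contains (drop i \<pi>) q" by blast
  obtain f where f1: "strict_mono_on {1..?k} f" and f2: "\<forall>j\<in>{1..?k}. f j < length (take i \<pi>)"
    and f3: "\<forall>j m. (j, m) \<in> snd p \<and> j \<noteq> m \<longrightarrow> take i \<pi> ! f j < take i \<pi> ! f m"
    using A unfolding contains_def by blast
  obtain g where g1: "strict_mono_on {1..?l} g" and g2: "\<forall>j\<in>{1..?l}. g j < length (drop i \<pi>)"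
    and g3: "\<forall>j m. (j, m) \<in> snd q \<and> j \<noteq> m \<longrightarrow> drop i \<pi> ! g j < drop i \<pi> ! g m"
    using B unfolding contains_def by blast
  define idx where "idx = (\<lambda>j. if j \<le> ?k then f j else i + g (j - ?k))"
  have fi: "f j < i" if "j \<in> {1..?k}" for j using f2 that by auto
  have fs: "fst (disjoint_sum p q) = ?k + ?l" by (simp add: disjoint_sum_def)
  have sd: "(j, m) \<in> snd p \<or> (\<exists>a b. j = ?k + a \<and> m = ?k + b \<and> (a, b) \<in> snd q)"
    if "(j, m) \<in> snd (disjoint_sum p q)" for j m
    using that by (auto simp add: disjoint_sum_def)
  show "contains \<pi> (disjoint_sum p q)" unfolding contains_def fs
  proof (intro exI[of _ idx] conjI allI impI)
    show "strict_mono_on {1..?k + ?l} idx"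
    proof (rule strict_mono_onI)
      fix r s assume rs: "r \<in> {1..?k + ?l}" "s \<in> {1..?k + ?l}" "r < s"
      show "idx r < idx s"
      proof (cases "s \<le> ?k")
        case True
        then show ?thesis using rs strict_mono_onD[OF f1, of r s] unfolding idx_def by simp
      next
        case s: False
        show ?thesis
        proof (cases "r \<le> ?k")
          case True
          then show ?thesis using s fi[of r] rs unfolding idx_def by auto
        next
          case False
          then have "g (r - ?k) < g (s - ?k)" using s rs strict_mono_onD[OF g1, of "r - ?k" "s - ?k"] by simp
          then show ?thesis using s False unfolding idx_def by auto
        qed
      qed
    qed
    show "\<forall>j\<in>{1..?k + ?l}. idx j < length \<pi>"
    proof
      fix j assume j: "j \<in> {1..?k + ?l}"
      show "idx j < length \<pi>"
      proof (cases "j \<le> ?k")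
        case True then show ?thesis using fi[of j] j il unfolding idx_def by auto
      next
        case False
        then have "j - ?k \<in> {1..?l}" using j by auto
        then have "g (j - ?k) < length \<pi> - i" using g2 by auto
        then show ?thesis using False unfolding idx_def by auto
      qed
    qed
    fix j m assume a: "(j, m) \<in> snd (disjoint_sum p q) \<and> j \<noteq> m"
    show "\<pi> ! idx j < \<pi> ! idx m"
    proof (cases "(j, m) \<in> snd p")
      case True
      have jm: "j \<in> {1..?k}" "m \<in> {1..?k}" using pop_field[OF P True] by auto
      have "take i \<pi> ! f j < take i \<pi> ! f m" using f3 True a by blast
      then show ?thesis using fi[OF jm(1)] fi[OF jm(2)] jm unfolding idx_def by simp
    next
      case False
      then obtain a' b' where ab: "j = ?k + a'" "m = ?k + b'" "(a', b') \<in> snd q" using a sd by blast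
      have abf: "a' \<in> {1..?l}" "b' \<in> {1..?l}" using pop_field[OF Q ab(3)] by auto
      have "drop i \<pi> ! g a' < drop i \<pi> ! g b'" using g3 ab a by auto
      then show ?thesis using ab abf il unfolding idx_def by (simp add: nth_drop)
    qed
  qed
qed

lemma comb:
  fixes P Q :: "nat \<Rightarrow> bool"
  assumes mono: "\<And>i j. i \<le> j \<Longrightarrow> P i \<Longrightarrow> P j" and anti: "\<And>i j. i \<le> j \<Longrightarrow> Q j \<Longrightarrow> Q i"
    and P0: "\<not> P 0"
  shows "\<not> Q n \<Longrightarrow> (of_bool (\<not>(\<exists>i\<le>n. P i \<and> Q i)) :: int) = of_bool (\<not>P n) + of_bool (\<not>Q 0)
     + (\<Sum>i<n. of_bool (\<not>P i \<and> \<not>Q (Suc i))) - (\<Sum>i\<le>n. of_bool (\<not>P i \<and> \<not>Q i))"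
proof (induction n)
  case 0
  then show ?case using P0 by simp
next
  case (Suc n)
  show ?case
  proof (cases "Q n")
    case False
    have L: "(\<exists>i\<le>Suc n. P i \<and> Q i) = (\<exists>i\<le>n. P i \<and> Q i)" using Suc.prems by (auto simp: le_Suc_eq)
    show ?thesis unfolding L Suc.IH[OF False] using Suc.prems by (simp add: sum.atMost_Suc)
  next
    case True
    have Qi: "Q i" if "i \<le> n" for i using anti[OF that True] .
    have S1: "(\<Sum>i<n. (of_bool (\<not>P i \<and> \<not>Q (Suc i)) :: int)) = 0"
      by (rule sum.neutral) (auto intro: Qi)
    have S2: "(\<Sum>i\<le>n. (of_bool (\<not>P i \<and> \<not>Q i) :: int)) = 0"
      by (rule sum.neutral) (auto intro: Qi)
    have L: "(\<exists>i\<le>Suc n. P i \<and> Q i) = P n"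
    proof
      assume "\<exists>i\<le>Suc n. P i \<and> Q i"
      then obtain i where i: "i \<le> Suc n" "P i" "Q i" by blast
      have "i \<noteq> Suc n" using i Suc.prems by auto
      then have "i \<le> n" using i by simp
      then show "P n" using mono i by blast
    next
      assume "P n" then show "\<exists>i\<le>Suc n. P i \<and> Q i" using True le_SucI[OF order.refl] by blast
    qed
    have Q0: "Q 0" using Qi by simp
    show ?thesis unfolding L using S1 S2 Q0 True Suc.prems
      by (simp add: sum.atMost_Suc)
  qed
qed

lemma finite_perms: "finite (perms n)"
  unfolding perms_LL by (rule finite_LL) simp

lemma perms_one: "perms 1 = {[1]}"
proof
  show "perms 1 \<subseteq> {[1]}"
  proof
    fix xs assume "xs \<in> perms 1"
    then have d: "distinct xs" "set xs = {1}" unfolding perms_def by auto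
    then have "length xs = 1" using distinct_card[of xs] by simp
    then obtain x where "xs = [x]" by (cases xs) auto
    then show "xs \<in> {[1]}" using d by simp
  qed
  show "{[1]} \<subseteq> perms 1" unfolding perms_def by simp
qed

lemma card_bool_sum: "finite A \<Longrightarrow> (\<Sum>x\<in>A. (of_bool (P x) :: int)) = int (card {x\<in>A. P x})"
  by (simp add: sum_of_bool_eq Int_def)

definition FF :: "(nat \<Rightarrow> int) \<Rightarrow> (nat \<Rightarrow> int) \<Rightarrow> nat \<Rightarrow> int" where
  "FF A B n = A n + B n + (\<Sum>i<n. of_nat (n choose Suc i) * of_nat (Suc i) * A i * B (n - Suc i))
     - (\<Sum>i\<le>n. of_nat (n choose i) * A i * B (n - i))"

lemma FF_sym: "FF A B n = FF B A n"
proof -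
  have 1: "(\<Sum>i\<le>n. of_nat (n choose i) * A i * B (n - i)) = (\<Sum>i\<le>n. of_nat (n choose i) * B i * A (n - i))"
  proof -
    let ?g = "\<lambda>i. of_nat (n choose i) * B i * A (n - i)"
    have "(\<Sum>i\<le>n. ?g i) = (\<Sum>i<Suc n. ?g i)" by (simp add: lessThan_Suc_atMost)
    also have "\<dots> = (\<Sum>i<Suc n. ?g (Suc n - Suc i))" by (rule sum.nat_diff_reindex[symmetric])
    also have "\<dots> = (\<Sum>i<Suc n. of_nat (n choose i) * A i * B (n - i))"
    proof (rule sum.cong[OF refl])
      fix i assume "i \<in> {..<Suc n}"
      then have i: "i \<le> n" by simp
      then have "n choose (n - i) = n choose i" using binomial_symmetric[OF i] by simp
      then show "?g (Suc n - Suc i) = of_nat (n choose i) * A i * B (n - i)" using i by simp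
    qed
    finally show ?thesis by (simp add: lessThan_Suc_atMost)
  qed
  have 2: "(\<Sum>i<n. of_nat (n choose Suc i) * of_nat (Suc i) * A i * B (n - Suc i))
         = (\<Sum>i<n. of_nat (n choose Suc i) * of_nat (Suc i) * B i * A (n - Suc i))"
  proof -
    let ?g = "\<lambda>i. of_nat (n choose Suc i) * of_nat (Suc i) * B i * A (n - Suc i)"
    have "(\<Sum>i<n. ?g i) = (\<Sum>i<n. ?g (n - Suc i))" by (rule sum.nat_diff_reindex[symmetric])
    also have "\<dots> = (\<Sum>i<n. of_nat (n choose Suc i) * of_nat (Suc i) * A i * B (n - Suc i))"
    proof (rule sum.cong[OF refl])
      fix i assume "i \<in> {..<n}"
      then obtain m where n: "n = Suc m" and im: "i \<le> m" by (cases n) auto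
      have e1: "Suc i * (n choose Suc i) = n * (m choose i)" using Suc_times_binomial[of i m] n by simp
      have e2: "Suc (m - i) * (n choose Suc (m - i)) = n * (m choose (m - i))"
        using Suc_times_binomial[of "m - i" m] n by simp
      have e3: "m choose (m - i) = m choose i" using binomial_symmetric[OF im] by simp
      have d: "n - Suc i = m - i" using n by simp
      have e5: "n - Suc (m - i) = i" using n im by simp
      have e4: "(n choose Suc (m - i)) * Suc (m - i) = (n choose Suc i) * Suc i"
      proof -
        have "(n choose Suc (m - i)) * Suc (m - i) = n * (m choose i)" using e2 e3 by (simp only: mult.commute)
        also have "\<dots> = (n choose Suc i) * Suc i" using e1 by (simp only: mult.commute)
        finally show ?thesis .
      qed
      have X: "of_nat (n choose Suc (m - i)) * of_nat (Suc (m - i)) = (of_nat (n choose Suc i) * of_nat (Suc i) :: int)"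
        using arg_cong[OF e4, of "of_nat :: nat \<Rightarrow> int"] by (simp only: of_nat_mult)
      have "?g (n - Suc i) = (of_nat (n choose Suc (m - i)) * of_nat (Suc (m - i))) * (A i * B (m - i))"
        unfolding d e5 by (simp only: mult_ac)
      also have "\<dots> = (of_nat (n choose Suc i) * of_nat (Suc i)) * (A i * B (m - i))" using X by simp
      also have "\<dots> = of_nat (n choose Suc i) * of_nat (Suc i) * A i * B (n - Suc i)"
        unfolding d by (simp only: mult_ac)
      finally show "?g (n - Suc i) = of_nat (n choose Suc i) * of_nat (Suc i) * A i * B (n - Suc i)" .
    qed
    finally show ?thesis by simp
  qed
  show ?thesis unfolding FF_def 1 2 by simp
qed

lemma card_perms1: "card (perms (Suc 0)) = Suc 0"
  using perms_one by simp

lemma cnt1: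
  assumes P: "is_POP p" and Q: "is_POP q" and i: "i \<le> n"
  shows "card {\<pi>\<in>perms n. \<not> contains (take i \<pi>) p \<and> \<not> contains (drop i \<pi>) q}
       = (n choose i) * card (avoiders i p) * card (avoiders (n - i) q)"
  using split_card[OF i oinv_avoid[OF P] oinv_avoid[OF Q]] unfolding avoiders_def .

lemma cnt2:
  assumes P: "is_POP p" and Q: "is_POP q" and i: "i < n"
  shows "card {\<pi>\<in>perms n. \<not> contains (take i \<pi>) p \<and> \<not> contains (drop (Suc i) \<pi>) q}
       = (n choose Suc i) * (Suc i * card (avoiders i p)) * card (avoiders (n - Suc i) q)"
proof -
  have e: "{\<pi>\<in>perms n. \<not> contains (take i \<pi>) p \<and> \<not> contains (drop (Suc i) \<pi>) q}
     = {\<pi>\<in>perms n. (\<lambda>\<sigma>. \<not> contains (take i \<sigma>) p) (take (Suc i) \<pi>) \<and> (\<lambda>\<sigma>. \<not> contains \<sigma> q) (drop (Suc i) \<pi>)}"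
    by simp
  have s1: "card {\<sigma>\<in>perms (Suc i). \<not> contains (take i \<sigma>) p} = Suc i * card (avoiders i p)"
  proof -
    have "{\<sigma>\<in>perms (Suc i). \<not> contains (take i \<sigma>) p}
        = {\<sigma>\<in>perms (Suc i). (\<lambda>\<sigma>. \<not> contains \<sigma> p) (take i \<sigma>) \<and> (\<lambda>_. True) (drop i \<sigma>)}" by simp
    also have "card \<dots> = (Suc i choose i) * card {\<sigma>\<in>perms i. \<not> contains \<sigma> p} * card {\<tau>\<in>perms (Suc i - i). True}"
      by (rule split_card) (auto simp: oinv_avoid[OF P] oinv_True)
    also have "\<dots> = Suc i * card (avoiders i p)"
      by (simp add: avoiders_def card_perms1 binomial_Suc_n)
    finally show ?thesis .
  qed
  have "card {\<pi>\<in>perms n. (\<lambda>\<sigma>. \<not> contains (take i \<sigma>) p) (take (Suc i) \<pi>) \<and> (\<lambda>\<sigma>. \<not> contains \<sigma> q) (drop (Suc i) \<pi>)}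
     = (n choose Suc i) * card {\<sigma>\<in>perms (Suc i). \<not> contains (take i \<sigma>) p} * card {\<tau>\<in>perms (n - Suc i). \<not> contains \<tau> q}"
    by (rule split_card) (use i in \<open>auto simp: oinv_avoid[OF Q] oinv_avoid_take[OF P]\<close>)
  then show ?thesis unfolding e s1 avoiders_def by simp
qed

lemma pointwise:
  assumes P: "is_POP p" and Q: "is_POP q" and k: "fst p \<ge> 1" and l: "fst q \<ge> 1"
    and pi: "\<pi> \<in> perms n"
  shows "(of_bool (\<not> contains \<pi> (disjoint_sum p q)) :: int)
     = of_bool (\<not> contains \<pi> p) + of_bool (\<not> contains \<pi> q)
     + (\<Sum>i<n. of_bool (\<not> contains (take i \<pi>) p \<and> \<not> contains (drop (Suc i) \<pi>) q))
     - (\<Sum>i\<le>n. of_bool (\<not> contains (take i \<pi>) p \<and> \<not> contains (drop i \<pi>) q))"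
proof -
  have len: "length \<pi> = n" using perms_length[OF pi] .
  have cs: "contains \<pi> (disjoint_sum p q) = (\<exists>i\<le>n. contains (take i \<pi>) p \<and> contains (drop i \<pi>) q)"
    using contains_sum[OF P Q k] len by simp
  have mono: "contains (take j \<pi>) p" if "i \<le> j" "contains (take i \<pi>) p" for i j
    using contains_take_mono[OF P that] .
  have anti: "contains (drop i \<pi>) q" if "i \<le> j" "contains (drop j \<pi>) q" for i j
  proof (cases "j \<le> length \<pi>")
    case True show ?thesis using contains_drop_anti[OF Q that(1) True that(2)] by blast
  next
    case False
    then have "drop j \<pi> = []" by simp
    then show ?thesis using that(2) contains_Nil[OF l] by simp
  qed
  have P0: "\<not> contains (take 0 \<pi>) p" using contains_Nil[OF k] by simp
  have Qn: "\<not> contains (drop n \<pi>) q" using contains_Nil[OF l] len by simp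
  have "(of_bool (\<not>(\<exists>i\<le>n. contains (take i \<pi>) p \<and> contains (drop i \<pi>) q)) :: int)
     = of_bool (\<not>contains (take n \<pi>) p) + of_bool (\<not>contains (drop 0 \<pi>) q)
     + (\<Sum>i<n. of_bool (\<not>contains (take i \<pi>) p \<and> \<not>contains (drop (Suc i) \<pi>) q))
     - (\<Sum>i\<le>n. of_bool (\<not>contains (take i \<pi>) p \<and> \<not>contains (drop i \<pi>) q))"
    by (rule comb[where P="\<lambda>i. contains (take i \<pi>) p" and Q="\<lambda>i. contains (drop i \<pi>) q"])
       (use mono anti P0 Qn in blast)+
  then show ?thesis unfolding cs using len by simp
qed

lemma count:
  assumes P: "is_POP p" and Q: "is_POP q" and k: "fst p \<ge> 1" and l: "fst q \<ge> 1"
  shows "int (card (avoiders n (disjoint_sum p q)))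
       = FF (\<lambda>m. int (card (avoiders m p))) (\<lambda>m. int (card (avoiders m q))) n"
proof -
  let ?X = "\<lambda>i \<pi>. \<not> contains (take i \<pi>) p \<and> \<not> contains (drop (Suc i) \<pi>) q"
  let ?Y = "\<lambda>i \<pi>. \<not> contains (take i \<pi>) p \<and> \<not> contains (drop i \<pi>) q"
  have fp: "finite (perms n)" by (rule finite_perms)
  have "int (card (avoiders n (disjoint_sum p q)))
      = (\<Sum>\<pi>\<in>perms n. (of_bool (\<not> contains \<pi> (disjoint_sum p q)) :: int))"
    unfolding avoiders_def using card_bool_sum[OF fp] by simp
  also have "\<dots> = (\<Sum>\<pi>\<in>perms n. of_bool (\<not> contains \<pi> p) + of_bool (\<not> contains \<pi> q)
     + (\<Sum>i<n. of_bool (?X i \<pi>)) - (\<Sum>i\<le>n. of_bool (?Y i \<pi>)))"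
    by (rule sum.cong[OF refl]) (rule pointwise[OF P Q k l])
  also have "\<dots> = (\<Sum>\<pi>\<in>perms n. of_bool (\<not> contains \<pi> p)) + (\<Sum>\<pi>\<in>perms n. of_bool (\<not> contains \<pi> q))
     + (\<Sum>i<n. \<Sum>\<pi>\<in>perms n. of_bool (?X i \<pi>)) - (\<Sum>i\<le>n. \<Sum>\<pi>\<in>perms n. of_bool (?Y i \<pi>))"
    by (simp only: sum.distrib sum_subtractf sum.swap[of _ "perms n"])
  also have "\<dots> = int (card (avoiders n p)) + int (card (avoiders n q))
     + (\<Sum>i<n. int (card {\<pi>\<in>perms n. ?X i \<pi>})) - (\<Sum>i\<le>n. int (card {\<pi>\<in>perms n. ?Y i \<pi>}))"
    unfolding avoiders_def card_bool_sum[OF fp] by simp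
  also have "(\<Sum>i<n. int (card {\<pi>\<in>perms n. ?X i \<pi>}))
     = (\<Sum>i<n. of_nat (n choose Suc i) * of_nat (Suc i) * int (card (avoiders i p)) * int (card (avoiders (n - Suc i) q)))"
  proof (rule sum.cong[OF refl])
    fix i assume "i \<in> {..<n}"
    then have "i < n" by simp
    then show "int (card {\<pi>\<in>perms n. ?X i \<pi>}) = of_nat (n choose Suc i) * of_nat (Suc i) * int (card (avoiders i p)) * int (card (avoiders (n - Suc i) q))"
      unfolding cnt2[OF P Q \<open>i < n\<close>] by (simp add: algebra_simps)
  qed
  also have "(\<Sum>i\<le>n. int (card {\<pi>\<in>perms n. ?Y i \<pi>}))
     = (\<Sum>i\<le>n. of_nat (n choose i) * int (card (avoiders i p)) * int (card (avoiders (n - i) q)))"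
  proof (rule sum.cong[OF refl])
    fix i assume "i \<in> {..n}"
    then have "i \<le> n" by simp
    then show "int (card {\<pi>\<in>perms n. ?Y i \<pi>}) = of_nat (n choose i) * int (card (avoiders i p)) * int (card (avoiders (n - i) q))"
      unfolding cnt1[OF P Q \<open>i \<le> n\<close>] by simp
  qed
  finally show ?thesis unfolding FF_def by simp
qed

lemma sum_zero:
  assumes "is_POP p" "fst p = 0"
  shows "disjoint_sum p q = disjoint_sum q p"
proof -
  have "snd p = {}" using assms unfolding is_POP_def by auto
  then show ?thesis using assms unfolding disjoint_sum_def by simp
qed

theorem theorem1p5:
  assumes "is_POP p" and "is_POP q"
  shows "wilf_equiv (disjoint_sum p q) (disjoint_sum q p)"
proof (cases "fst p = 0 \<or> fst q = 0")
  case True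
  then have "disjoint_sum p q = disjoint_sum q p" using sum_zero assms by metis
  then show ?thesis unfolding wilf_equiv_def by simp
next
  case False
  then have k: "fst p \<ge> 1" and l: "fst q \<ge> 1" by auto
  show ?thesis unfolding wilf_equiv_def
  proof (intro allI impI)
    fix n :: nat
    have "int (card (avoiders n (disjoint_sum p q))) = int (card (avoiders n (disjoint_sum q p)))"
      unfolding count[OF assms k l] count[OF assms(2,1) l k] by (rule FF_sym)
    then show "card (avoiders n (disjoint_sum p q)) = card (avoiders n (disjoint_sum q p))" by simp
  qed
qed

end
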